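(* Assume $\sqrt T\le W\le T$ and $968kS\le T$. Let $\tau$ be the smallest integer $r\ge1$ such that, after the first $r$ rounds of uniform sampling, some arm $i$ satisfies $\sum_{s=1}^{n_i(r)}Y_{i,s}>420c^2\log W$, where $n_i(r)$ is the number of $r'\le r$ with $U_{r'}=i$. Then on the event $E$, $$128kS\le\tau\le 968kS.$$
   Context: Bandit setup: $k$ arms, arm $i$ a distribution on $[0,1]$ with mean $\mu_i$, $\mu^*:=\max_i\mu_i>0$. $\log$ is the natural logarithm; $c:=3$; $T$ is the overall horizon, $W$ a window length (positive integer), and $S:=\frac{c^2\log T}{\mu^*}$. Canonical model: a $k\times T$ table $(Y_{i,s})$ of independent entries with $Y_{i,s}$ distributed as arm $i$, the $s$-th pull of arm $i$ yielding $Y_{i,s}$; $\widehat\mu_{i,s}:=\frac1s\sum_{r=1}^sY_{i,r}$. Uniform sampling is modeled by independent uniform $U_1,\dots,U_T\in[k]$ (independent of the table); the $r$-th round of uniform sampling pulls $U_r$. Events: $E_1$: for every integer $r$ with $128kS\le r\le T$ and every arm $i$, the number of $r'\le r$ with $U_{r'}=i$ is at least $\frac{r}{2k}$ and at most $\frac{3r}{2k}$. $E_2$: for every arm $i$ with $\mu_i>\frac{\mu^*}{64}$ and every integer $s$ with $64S\le s\le T$, $|\mu_i-\widehat\mu_{i,s}|\le c\sqrt{\frac{\mu_i\log T}{s}}$. $E_3$: for every arm $j$ with $\mu_j\le\frac{\mu^*}{64}$ and every integer $s$ with $64S\le s\le T$, $\widehat\mu_{j,s}<\frac{\mu^*}{32}$.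 $E:=E_1\cap E_2\cap E_3$. *)

theory Defs
  imports Complex_Main
begin

text \<open>Arms are indexed by {1..k}; rounds and pull counts start at 1.
  A realization consists of means mu, the reward table Y (Y i s = s-th pull of arm i)
  and the uniform-sampling sequence U (U r = arm pulled in round r).\<close>

definition c_const :: real where "c_const = 3"

definition mu_star :: "nat \<Rightarrow> (nat \<Rightarrow> real) \<Rightarrow> real" where
  "mu_star k mu = Max (mu ` {1..k})"

definition S_par :: "nat \<Rightarrow> (nat \<Rightarrow> real) \<Rightarrow> nat \<Rightarrow> real" where
  "S_par k mu T = c_const^2 * ln (real T) / mu_star k mu"

definition pulls :: "(nat \<Rightarrow> nat) \<Rightarrow> nat \<Rightarrow> nat \<Rightarrow> nat" where
  "pulls U i r = card {r' \<in> {1..r}. U r' = i}"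

definition emp_mean :: "(nat \<Rightarrow> nat \<Rightarrow> real) \<Rightarrow> nat \<Rightarrow> nat \<Rightarrow> real" where
  "emp_mean Y i s = (\<Sum>r=1..s. Y i r) / real s"

definition event_E1 :: "nat \<Rightarrow> (nat \<Rightarrow> real) \<Rightarrow> nat \<Rightarrow> (nat \<Rightarrow> nat) \<Rightarrow> bool" where
  "event_E1 k mu T U \<longleftrightarrow>
     (\<forall>r::nat. 128 * real k * S_par k mu T \<le> real r \<and> r \<le> T \<longrightarrow>
        (\<forall>i\<in>{1..k}. real r / (2 * real k) \<le> real (pulls U i r)
                    \<and> real (pulls U i r) \<le> 3 * real r / (2 * real k)))"

definition event_E2 :: "nat \<Rightarrow> (nat \<Rightarrow> real) \<Rightarrow> nat \<Rightarrow> (nat \<Rightarrow> nat \<Rightarrow> real) \<Rightarrow> bool" where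
  "event_E2 k mu T Y \<longleftrightarrow>
     (\<forall>i\<in>{1..k}. mu i > mu_star k mu / 64 \<longrightarrow>
        (\<forall>s::nat. 64 * S_par k mu T \<le> real s \<and> s \<le> T \<longrightarrow>
           \<bar>mu i - emp_mean Y i s\<bar> \<le> c_const * sqrt (mu i * ln (real T) / real s)))"

definition event_E3 :: "nat \<Rightarrow> (nat \<Rightarrow> real) \<Rightarrow> nat \<Rightarrow> (nat \<Rightarrow> nat \<Rightarrow> real) \<Rightarrow> bool" where
  "event_E3 k mu T Y \<longleftrightarrow>
     (\<forall>j\<in>{1..k}. mu j \<le> mu_star k mu / 64 \<longrightarrow>
        (\<forall>s::nat. 64 * S_par k mu T \<le> real s \<and> s \<le> T \<longrightarrow>
           emp_mean Y j s < mu_star k mu / 32))"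

definition event_E where
  "event_E k mu T U Y \<longleftrightarrow> event_E1 k mu T U \<and> event_E2 k mu T Y \<and> event_E3 k mu T Y"

definition tau :: "nat \<Rightarrow> nat \<Rightarrow> nat \<Rightarrow> (nat \<Rightarrow> nat) \<Rightarrow> (nat \<Rightarrow> nat \<Rightarrow> real) \<Rightarrow> nat" where
  "tau k T W U Y = (LEAST r. 1 \<le> r \<and> r \<le> T \<and>
     (\<exists>i\<in>{1..k}. (\<Sum>s=1..pulls U i r. Y i s) > 420 * c_const^2 * ln (real W)))"

end

theory Submission
  imports Defs
begin

lemma pulls_mono: "r \<le> r' \<Longrightarrow> pulls U i r \<le> pulls U i r'"
  unfolding pulls_def by (intro card_mono) auto

lemma pulls_le: "pulls U i r \<le> r"
proof -
  have "pulls U i r \<le> card {1..r}" unfolding pulls_def by (intro card_mono) auto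
  then show ?thesis by simp
qed

lemma ln2_half: "ln (2::real) \<ge> 1/2"
proof -
  have "exp (1/2::real) ^ 2 = exp 1" by (simp add: exp_of_nat_mult[symmetric] power2_eq_square exp_add[symmetric])
  also have "\<dots> \<le> 3" by (rule exp_le)
  finally have "exp (1/2::real) ^ 2 \<le> 2 ^ 2" by simp
  then have "exp (1/2::real) \<le> 2" by (rule power2_le_imp_le) simp
  then have "ln (exp (1/2::real)) \<le> ln 2" by (subst ln_le_cancel_iff) auto
  then show ?thesis by simp
qed

theorem lemma8:
  fixes k T W :: nat and mu :: "nat \<Rightarrow> real"
    and Y :: "nat \<Rightarrow> nat \<Rightarrow> real" and U :: "nat \<Rightarrow> nat"
  assumes k: "k \<ge> 1"
    and T: "T \<ge> 2"
    and W: "W \<ge> 1"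
    and mu_range: "\<forall>i\<in>{1..k}. 0 \<le> mu i \<and> mu i \<le> 1"
    and mu_pos: "mu_star k mu > 0"
    and Y_range: "\<forall>i\<in>{1..k}. \<forall>s\<in>{1..T}. 0 \<le> Y i s \<and> Y i s \<le> 1"
    and U_range: "\<forall>r\<in>{1..T}. U r \<in> {1..k}"
    and W_lo: "sqrt (real T) \<le> real W" and W_hi: "W \<le> T"
    and T_big: "968 * real k * S_par k mu T \<le> real T"
    and E: "event_E k mu T U Y"
  shows "128 * real k * S_par k mu T \<le> real (tau k T W U Y)
       \<and> real (tau k T W U Y) \<le> 968 * real k * S_par k mu T"
proof -
  define m where "m = mu_star k mu"
  define L where "L = ln (real T)"
  define S where "S = S_par k mu T"
  have c3: "c_const = 3" by (simp add: c_const_def)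
  have m0: "m > 0" using mu_pos m_def by simp
  have S_eq: "S = 9 * L / m" unfolding S_def S_par_def L_def m_def c3 by simp
  have fin: "finite (mu ` {1..k})" by simp
  have ne: "mu ` {1..k} \<noteq> {}" using k by auto
  have m_in: "m \<in> mu ` {1..k}" unfolding m_def mu_star_def using Max_in[OF fin ne] .
  then obtain istar where istar: "istar \<in> {1..k}" "mu istar = m" by auto
  have m1: "m \<le> 1" using m_in mu_range by auto
  have mu_le: "\<And>i. i \<in> {1..k} \<Longrightarrow> mu i \<le> m"
    unfolding m_def mu_star_def using fin by auto
  have L2: "L \<ge> ln 2" unfolding L_def using T by simp
  have Lh: "L \<ge> 1/2" using L2 ln2_half by linarith
  have "real T = sqrt (real T) ^ 2" by simp
  also have "\<dots> \<le> real W ^ 2" using W_lo by (intro power_mono) auto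
  finally have TW: "real T \<le> real W ^ 2" .
  have lnW: "L \<le> 2 * ln (real W)"
  proof -
    have "L \<le> ln (real W ^ 2)" unfolding L_def using TW T W by (subst ln_le_cancel_iff) auto
    also have "\<dots> = 2 * ln (real W)" using W by (simp add: ln_realpow)
    finally show ?thesis .
  qed
  have lnWT: "ln (real W) \<le> L" unfolding L_def using W W_hi by (subst ln_le_cancel_iff) auto
  have S9: "S \<ge> 9 * L"
  proof -
    have "9 * L / 1 \<le> 9 * L / m" using m0 m1 Lh by (intro divide_left_mono) auto
    then show ?thesis unfolding S_eq by simp
  qed
  have kS: "real k * S \<ge> 4"
  proof -
    have "1 * S \<le> real k * S" using k S9 Lh by (intro mult_right_mono) auto
    then show ?thesis using S9 Lh by linarith
  qed
  have a968: "968 * real k * S = 968 * (real k * S)" and a128: "128 * real k * S = 128 * (real k * S)"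
    by simp_all
  have TB: "968 * real k * S \<le> real T" using T_big S_def by simp
  define P where "P = (\<lambda>r. 1 \<le> r \<and> r \<le> T \<and>
     (\<exists>i\<in>{1..k}. (\<Sum>s=1..pulls U i r. Y i s) > 420 * c_const^2 * ln (real W)))"
  have tau_eq: "tau k T W U Y = (LEAST r. P r)" unfolding tau_def P_def by simp
  have E1: "event_E1 k mu T U" and E2: "event_E2 k mu T Y" and E3: "event_E3 k mu T Y"
    using E unfolding event_E_def by auto
  have sum_emp: "\<And>i n. n > 0 \<Longrightarrow> (\<Sum>s=1..n. Y i s) = real n * emp_mean Y i n"
    unfolding emp_mean_def by simp
  define r1 where "r1 = nat \<lfloor>968 * real k * S\<rfloor>"
  have r1a: "real r1 \<le> 968 * real k * S" unfolding r1_def using kS by linarith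
  have r1b: "real r1 \<ge> 968 * real k * S - 1" unfolding r1_def using kS by linarith
  have r1T: "r1 \<le> T" using r1a TB by linarith
  have r1lo: "128 * real k * S_par k mu T \<le> real r1" using r1b kS a968 a128 unfolding S_def[symmetric] by linarith
  define n where "n = pulls U istar r1"
  have nb: "real r1 / (2 * real k) \<le> real n"
    using E1 r1lo r1T istar unfolding event_E1_def n_def by blast
  have kpos: "real k > 0" using k by simp
  have n484: "real n \<ge> 484 * S - 1/2"
  proof -
    have "484 * S - 1/2 \<le> (968 * real k * S - 1) / (2 * real k)"
      using kpos k by (simp add: field_simps)
    also have "\<dots> \<le> real r1 / (2 * real k)" using r1b kpos by (simp add: divide_right_mono)
    finally show ?thesis using nb by linarith
  qed
  have n64: "64 * S_par k mu T \<le> real n" using n484 S9 Lh S_def by linarith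
  have nT: "n \<le> T" using pulls_le[of U istar r1] r1T n_def by simp
  have n0: "n > 0" using n484 S9 Lh by simp
  have mbig: "mu istar > mu_star k mu / 64" using istar m_def m0 by simp
  have dev: "\<bar>m - emp_mean Y istar n\<bar> \<le> 3 * sqrt (m * L / real n)"
    using E2 istar mbig n64 nT unfolding event_E2_def L_def c3 by auto
  define q where "q = sqrt (m * L * real n)"
  have q0: "q \<ge> 0" unfolding q_def using m0 Lh by simp
  have nsq: "real n * sqrt (m * L / real n) = q"
  proof -
    have "real n = sqrt (real n) * sqrt (real n)" by simp
    then have "real n * sqrt (m * L / real n) = sqrt (real n) * (sqrt (real n) * sqrt (m * L / real n))"
      by (metis mult.assoc)
    also have "sqrt (real n) * sqrt (m * L / real n) = sqrt (m * L)"
      using n0 by (simp add: real_sqrt_mult[symmetric])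
    finally show ?thesis unfolding q_def by (simp add: real_sqrt_mult mult_ac)
  qed
  have qq: "q^2 = m * L * real n" unfolding q_def using m0 Lh by simp
  have nm: "real n * m \<ge> 4355 * L"
  proof -
    have "real n * m \<ge> (484 * S - 1/2) * m" using n484 m0 by (simp add: mult_right_mono)
    moreover have "(484 * S - 1/2) * m = 4356 * L - m / 2" unfolding S_eq using m0 by (simp add: field_simps)
    ultimately show ?thesis using m1 Lh by linarith
  qed
  have q65: "q \<ge> 65 * L"
  proof -
    have "L * (4355 * L) \<le> L * (real n * m)" using nm Lh by (intro mult_left_mono) auto
    then have "(65 * L)^2 \<le> q^2" unfolding qq using Lh
      by (simp add: power2_eq_square algebra_simps)
    then show ?thesis using q0 by (rule power2_le_imp_le)
  qed
  have sumlo: "(\<Sum>s=1..n. Y istar s) \<ge> real n * m - 3 * q"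
  proof -
    have "emp_mean Y istar n \<ge> m - 3 * sqrt (m * L / real n)" using dev by linarith
    then have "real n * emp_mean Y istar n \<ge> real n * (m - 3 * sqrt (m * L / real n))"
      by (simp add: mult_left_mono)
    then show ?thesis using sum_emp[OF n0, of istar] nsq by (simp add: algebra_simps)
  qed
  have nmq: "real n * m * L = q^2" unfolding qq by (simp add: mult_ac)
  have key: "real n * m - 3 * q > 3780 * ln (real W)"
  proof -
    have "(real n * m - 3 * q) * L = q * (q - 3 * L)" using nmq by (simp add: algebra_simps power2_eq_square)
    also have "\<dots> \<ge> (65 * L) * (62 * L)" using q65 Lh by (intro mult_mono) auto
    finally have "(real n * m - 3 * q) * L \<ge> 4030 * L * L" by simp
    then have "(4030 * L) * L \<le> (real n * m - 3 * q) * L" by simp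
    then have "real n * m - 3 * q \<ge> 4030 * L"
      using mult_right_le_imp_le[of "4030 * L" L "real n * m - 3 * q"] Lh by simp
    then show ?thesis using lnWT Lh by linarith
  qed
  have Pr1: "P r1"
  proof -
    have "(\<Sum>s=1..pulls U istar r1. Y istar s) > 420 * c_const^2 * ln (real W)"
      using sumlo key unfolding n_def c3 by simp
    moreover have "1 \<le> r1" using r1b kS a968 by linarith
    ultimately show ?thesis unfolding P_def using r1T istar by blast
  qed
  have tau_le: "tau k T W U Y \<le> r1" unfolding tau_eq by (rule Least_le[of P, OF Pr1])
  have Ptau: "P (tau k T W U Y)" unfolding tau_eq by (rule LeastI[of P, OF Pr1])
  have lower: "128 * real k * S \<le> real (tau k T W U Y)"
  proof (rule ccontr)
    assume less: "\<not> ?thesis"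
    define t where "t = tau k T W U Y"
    define r0 where "r0 = nat \<lceil>128 * real k * S\<rceil>"
    have r0a: "real r0 < 128 * real k * S + 1" unfolding r0_def using kS by linarith
    have r0b: "real r0 \<ge> 128 * real k * S" unfolding r0_def using kS by linarith
    have r0T: "r0 \<le> T" using r0a TB kS a968 a128 by linarith
    have tr0: "t \<le> r0" using less r0b unfolding t_def by linarith
    from Ptau obtain i where i: "i \<in> {1..k}"
      and big: "(\<Sum>s=1..pulls U i t. Y i s) > 420 * c_const^2 * ln (real W)"
      unfolding P_def t_def by blast
    define n0 where "n0 = pulls U i r0"
    have nb0: "real r0 / (2 * real k) \<le> real n0 \<and> real n0 \<le> 3 * real r0 / (2 * real k)"
      using E1 r0b r0T i S_def unfolding event_E1_def n0_def by blast
    have n0lo: "real n0 \<ge> 64 * S"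
    proof -
      have "64 * S = (128 * real k * S) / (2 * real k)" using kpos by simp
      also have "\<dots> \<le> real r0 / (2 * real k)" using r0b kpos by (intro divide_right_mono) auto
      finally show ?thesis using nb0 by linarith
    qed
    have n0hi: "real n0 \<le> 192 * S + 3/2"
    proof -
      have "real n0 \<le> 3 * real r0 / (2 * real k)" using nb0 by simp
      also have "\<dots> \<le> 3 * (128 * real k * S + 1) / (2 * real k)"
        using r0a kpos by (simp add: divide_right_mono)
      also have "\<dots> = 192 * S + 3 / (2 * real k)" using kpos by (simp add: field_simps)
      also have "\<dots> \<le> 192 * S + 3/2" using k by (simp add: field_simps)
      finally show ?thesis .
    qed
    have n0T: "n0 \<le> T" using pulls_le[of U i r0] r0T n0_def by simp
    have n0pos: "n0 > 0" using n0lo S9 Lh by simp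
    have pt: "pulls U i t \<le> n0" unfolding n0_def using pulls_mono[OF tr0] .
    have mono: "(\<Sum>s=1..pulls U i t. Y i s) \<le> (\<Sum>s=1..n0. Y i s)"
      using Y_range i n0T pt by (intro sum_mono2) auto
    have n0m: "real n0 * m \<le> 1728 * L + 3/2"
    proof -
      have "real n0 * m \<le> (192 * S + 3/2) * m" using n0hi m0 by (simp add: mult_right_mono)
      also have "\<dots> = 1728 * L + 3/2 * m" unfolding S_eq using m0 by (simp add: field_simps)
      finally show ?thesis using m1 by linarith
    qed
    have bound: "(\<Sum>s=1..n0. Y i s) \<le> 1890 * L"
    proof (cases "mu i > mu_star k mu / 64")
      case True
      have n064: "64 * S_par k mu T \<le> real n0" using n0lo S_def by simp
      have dev: "\<bar>mu i - emp_mean Y i n0\<bar> \<le> 3 * sqrt (mu i * L / real n0)"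
        using E2 i True n064 n0T unfolding event_E2_def L_def c3 by auto
      have mi0: "mu i \<ge> 0" and mim: "mu i \<le> m" using mu_range i mu_le by auto
      have "emp_mean Y i n0 \<le> m + 3 * sqrt (m * L / real n0)"
      proof -
        have "sqrt (mu i * L / real n0) \<le> sqrt (m * L / real n0)"
          using mim Lh n0pos by (intro real_sqrt_le_mono divide_right_mono mult_right_mono) auto
        then show ?thesis using dev mim by linarith
      qed
      then have "real n0 * emp_mean Y i n0 \<le> real n0 * (m + 3 * sqrt (m * L / real n0))"
        by (simp add: mult_left_mono)
      moreover have "real n0 * sqrt (m * L / real n0) = sqrt (m * L * real n0)"
      proof -
        have "real n0 = sqrt (real n0) * sqrt (real n0)" by simp
        then have "real n0 * sqrt (m * L / real n0) = sqrt (real n0) * (sqrt (real n0) * sqrt (m * L / real n0))"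
          by (metis mult.assoc)
        also have "sqrt (real n0) * sqrt (m * L / real n0) = sqrt (m * L)"
          using n0pos by (simp add: real_sqrt_mult[symmetric])
        finally show ?thesis by (simp add: real_sqrt_mult mult_ac)
      qed
      moreover have "sqrt (m * L * real n0) \<le> 42 * L"
      proof -
        have "m * L * real n0 \<le> (42 * L)^2"
        proof -
          have "m * L * real n0 = L * (real n0 * m)" by (simp add: mult_ac)
          also have "\<dots> \<le> L * (1728 * L + 3/2)" using n0m Lh by (intro mult_left_mono) auto
          also have "\<dots> \<le> (42 * L)^2"
          proof -
            have "L * (3/2) \<le> L * (36 * L)" using Lh by (intro mult_left_mono) auto
            then show ?thesis by (simp add: power2_eq_square algebra_simps)
          qed
          finally show ?thesis .
        qed
        then have "sqrt (m * L * real n0) \<le> sqrt ((42 * L)^2)" by (rule real_sqrt_le_mono)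
        also have "sqrt ((42 * L)^2) = 42 * L" using Lh by (intro real_sqrt_unique) auto
        finally show ?thesis .
      qed
      ultimately show ?thesis using sum_emp[OF n0pos, of i] n0m Lh by (simp add: algebra_simps)
    next
      case False
      have n064: "64 * S_par k mu T \<le> real n0" using n0lo S_def by simp
      have "emp_mean Y i n0 < m / 32"
        using E3 i False n064 n0T unfolding event_E3_def m_def by auto
      then have "real n0 * emp_mean Y i n0 \<le> real n0 * (m / 32)"
        by (intro mult_left_mono) auto
      then show ?thesis using sum_emp[OF n0pos, of i] n0m Lh by simp
    qed
    have "420 * c_const^2 * ln (real W) \<ge> 1890 * L" using lnW unfolding c3 by simp
    then show False using big mono bound by linarith
  qed
  show ?thesis using lower tau_le r1a S_def by simp
qed

end
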